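(* Let $n$ be the least counterexample to Robin's inequality, i.e. the least integer $n>5040$ with $\sigma(n)\ge e^{\gamma} n\log\log n$ (assuming such an integer exists). Let $p_r$ denote the largest prime divisor of $n$. Then $\log n> p_r$.
   Context: $\sigma(n)=\sum_{d\mid n} d$ is the sum-of-divisors function, $\gamma$ is the Euler–Mascheroni constant, and $\log$ is the natural logarithm. Robin's inequality (RI) for an integer $n>5040$ is $\sigma(n)<e^{\gamma} n\log\log n$. *)

theory Defs
  imports "HOL-Analysis.Analysis" "HOL-Computational_Algebra.Primes"
begin

definition sigma :: "nat \<Rightarrow> nat" where
  "sigma n = (\<Sum>d\<in>{d. d dvd n}. d)"

definition robin_ineq :: "nat \<Rightarrow> bool" where
  "robin_ineq n \<longleftrightarrow> real (sigma n) < exp euler_mascheroni * real n * ln (ln (real n))"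

end

theory Submission
  imports Defs
begin

lemma sigma_fin: "0 < (n::nat) \<Longrightarrow> finite {d. d dvd n}"
  by simp

lemma sigma_mult_prime:
  assumes "prime p" "0 < u"
  shows "sigma (u*p) \<le> sigma u * (p+1)"
proof -
  let ?D = "{d. d dvd u}"
  have p0: "0 < p" using assms(1) prime_gt_0_nat by blast
  have sub: "{d. d dvd u*p} \<subseteq> ?D \<union> (\<lambda>d. p*d) ` ?D"
  proof
    fix d assume "d \<in> {d. d dvd u*p}"
    then obtain b c where bc: "d = b*c" "b dvd u" "c dvd p" using division_decomp by blast
    then have "c = 1 \<or> c = p" using assms(1) prime_nat_iff by blast
    then show "d \<in> ?D \<union> (\<lambda>d. p*d) ` ?D" using bc by (auto simp: mult.commute)
  qed
  have fD: "finite ?D" using assms(2) by simp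
  have "sigma (u*p) \<le> sum (\<lambda>x. x) (?D \<union> (\<lambda>d. p*d) ` ?D)"
    unfolding sigma_def using sub fD by (intro sum_mono2) auto
  also have "\<dots> \<le> sum (\<lambda>x. x) ?D + sum (\<lambda>x. x) ((\<lambda>d. p*d) ` ?D)"
    using sum_Un_nat[of ?D "(\<lambda>d. p*d) ` ?D" id] fD by simp
  also have "sum (\<lambda>x. x) ((\<lambda>d. p*d) ` ?D) \<le> sum ((\<lambda>x. x) \<circ> (\<lambda>d. p*d)) ?D"
    using fD by (intro sum_image_le) auto
  also have "sum ((\<lambda>x. x) \<circ> (\<lambda>d. p*d)) ?D = p * sigma u"
    by (simp add: sigma_def sum_distrib_left)
  finally show ?thesis by (simp add: sigma_def algebra_simps)
qed

lemma sigma_gain: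
  assumes "prime r" "r dvd k" "\<not> r dvd u" "0 < u" "0 < k"
  shows "sigma u * (k + k div r) \<le> sigma (u*k)"
proof -
  let ?D = "{d. d dvd u}"
  define q where "q = k div r"
  have kq: "k = r*q" using assms(2) q_def by simp
  have q0: "0 < q" using kq assms(5) by (cases q) auto
  have fD: "finite ?D" using assms(4) by simp
  have dis: "(\<lambda>d. k*d) ` ?D \<inter> (\<lambda>d. q*d) ` ?D = {}"
  proof (rule ccontr)
    assume "(\<lambda>d. k*d) ` ?D \<inter> (\<lambda>d. q*d) ` ?D \<noteq> {}"
    then obtain d d' where dd: "d dvd u" "d' dvd u" "k*d = q*d'" by blast
    then have "q*(r*d) = q*d'" using kq by (simp add: algebra_simps)
    then have "d' = r*d" using q0 by simp
    then have "r dvd u" using dd(2) by (metis dvd_mult_left)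
    then show False using assms(3) by simp
  qed
  have sub: "(\<lambda>d. k*d) ` ?D \<union> (\<lambda>d. q*d) ` ?D \<subseteq> {d. d dvd u*k}"
    using kq by (auto intro: mult_dvd_mono)
  have fD2: "finite {d. d dvd u*k}" using assms(4,5) by simp
  have "sum (\<lambda>x. x) ((\<lambda>d. k*d) ` ?D) = k * sigma u"
    using assms(5) by (subst sum.reindex) (auto simp: inj_on_def sigma_def sum_distrib_left)
  moreover have "sum (\<lambda>x. x) ((\<lambda>d. q*d) ` ?D) = q * sigma u"
    using q0 by (subst sum.reindex) (auto simp: inj_on_def sigma_def sum_distrib_left)
  moreover have "sum (\<lambda>x. x) ((\<lambda>d. k*d) ` ?D \<union> (\<lambda>d. q*d) ` ?D) \<le> sigma (u*k)"
    unfolding sigma_def using sub fD2 by (intro sum_mono2) auto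
  moreover have "sum (\<lambda>x. x) ((\<lambda>d. k*d) ` ?D \<union> (\<lambda>d. q*d) ` ?D) = sum (\<lambda>x. x) ((\<lambda>d. k*d) ` ?D) + sum (\<lambda>x. x) ((\<lambda>d. q*d) ` ?D)"
    using dis fD by (intro sum.union_disjoint) auto
  ultimately show ?thesis unfolding q_def[symmetric] by (simp add: algebra_simps)
qed

function dsum :: "nat \<Rightarrow> nat \<Rightarrow> nat" where
 "dsum u d = (if d = 0 \<or> u < d*d then 0 else (if u mod d = 0 then d + u div d else 0) + dsum u (d+1))"
  by auto
termination
proof (relation "Wellfounded.measure (\<lambda>(u,d). u + 1 - d)")
  fix u d :: nat assume "\<not> (d = 0 \<or> u < d*d)"
  then have "d \<le> u" using le_square[of d] by linarith
  then show "((u, d+1), (u, d)) \<in> Wellfounded.measure (\<lambda>(u,d). u + 1 - d)" by simp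
qed auto
declare dsum.simps[simp del]
lemma ds1: "u < d*d \<Longrightarrow> dsum u d = 0" by (simp add: dsum.simps)
lemma ds2: "d \<noteq> 0 \<Longrightarrow> \<not> u < d*d \<Longrightarrow> dsum u d = (if u mod d = 0 then d + u div d else 0) + dsum u (d+1)"
  by (subst dsum.simps) simp

lemma fin_sq: "finite {e::nat. P e \<and> e*e \<le> u}"
proof (rule finite_subset[of _ "{..u}"])
  show "{e. P e \<and> e*e \<le> u} \<subseteq> {..u}"
  proof
    fix e assume "e \<in> {e. P e \<and> e*e \<le> u}"
    then have "e*e \<le> u" by simp
    moreover have "e \<le> e*e" by (rule le_square)
    ultimately have "e \<le> u" by linarith
    then show "e \<in> {..u}" by simp
  qed
qed simp

lemma dsum_eq: "0 < d \<Longrightarrow> dsum u d = (\<Sum>e\<in>{e. d \<le> e \<and> e*e \<le> u \<and> e dvd u}. e + u div e)"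
proof (induction u d rule: dsum.induct)
  case (1 u d)
  show ?case
  proof (cases "u < d*d")
    case True
    have E: "{e. d \<le> e \<and> e*e \<le> u \<and> e dvd u} = {}"
    proof (rule ccontr)
      assume "{e. d \<le> e \<and> e*e \<le> u \<and> e dvd u} \<noteq> {}"
      then obtain x where "d \<le> x" "x*x \<le> u" by blast
      then have "d*d \<le> u" using mult_le_mono[of d x d x] by linarith
      then show False using True by simp
    qed
    have "dsum u d = 0" using True by (rule ds1)
    then show ?thesis unfolding E by simp
  next
    case False
    have fin: "finite {e. Suc d \<le> e \<and> e*e \<le> u \<and> e dvd u}"
      using fin_sq[of "\<lambda>e. Suc d \<le> e \<and> e dvd u" u] by (simp add: conj_commute conj_left_commute)
    let ?R = "{e. Suc d \<le> e \<and> e*e \<le> u \<and> e dvd u}"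
    have IH: "dsum u (d+1) = (\<Sum>e\<in>?R. e + u div e)"
      using 1(1) 1(2) False by simp
    have st: "dsum u d = (if u mod d = 0 then d + u div d else 0) + dsum u (d+1)"
      using ds2[of d u] 1(2) False by simp
    show ?thesis
    proof (cases "d dvd u")
      case True
      have eq: "{e. d \<le> e \<and> e*e \<le> u \<and> e dvd u} = insert d ?R"
        using False True by (auto simp: not_less Suc_le_eq le_less)
      have "d \<notin> ?R" by simp
      then show ?thesis unfolding eq using fin st IH True by (simp add: dvd_eq_mod_eq_0)
    next
      case nd: False
      have eq: "{e. d \<le> e \<and> e*e \<le> u \<and> e dvd u} = ?R"
        using nd by (auto simp: Suc_le_eq le_less)
      show ?thesis unfolding eq using st IH nd by (simp add: dvd_eq_mod_eq_0)
    qed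
  qed
qed

lemma sigma_le_dsum:
  assumes "0 < u" shows "sigma u \<le> dsum u 1"
proof -
  let ?A = "{e. 1 \<le> e \<and> e*e \<le> u \<and> e dvd u}"
  have fA: "finite ?A"
    using fin_sq[of "\<lambda>e. 1 \<le> e \<and> e dvd u" u] by (simp add: conj_commute conj_left_commute)
  have sub: "{d. d dvd u} \<subseteq> ?A \<union> (\<lambda>e. u div e) ` ?A"
  proof
    fix d assume "d \<in> {d. d dvd u}"
    then obtain e where de: "u = d*e" by auto
    have "0 < d*e" using de assms by simp
    then have d1: "1 \<le> d" "1 \<le> e" by (auto simp: nat_0_less_mult_iff)
    have ddvd: "d dvd u" "e dvd u" using de by simp_all
    show "d \<in> ?A \<union> (\<lambda>e. u div e) ` ?A"
    proof (cases "d*d \<le> u")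
      case True
      then have "d \<in> ?A" using d1 ddvd by blast
      then show ?thesis by blast
    next
      case False
      then have "d*e < d*d" using de by simp
      then have "e < d" by simp
      then have "e*e \<le> d*e" by simp
      then have "e*e \<le> u" using de by simp
      then have eA: "e \<in> ?A" using d1 ddvd by blast
      have "d = u div e" using de d1 by simp
      then have "d \<in> (\<lambda>e. u div e) ` ?A" using eA by (rule image_eqI)
      then show ?thesis by blast
    qed
  qed
  have "sigma u \<le> sum (\<lambda>x. x) (?A \<union> (\<lambda>e. u div e) ` ?A)"
    unfolding sigma_def using sub fA by (intro sum_mono2) auto
  also have "\<dots> \<le> sum (\<lambda>x. x) ?A + sum (\<lambda>x. x) ((\<lambda>e. u div e) ` ?A)"
    using sum_Un_nat[of ?A "(\<lambda>e. u div e) ` ?A" "\<lambda>x. x"] fA by simp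
  also have "sum (\<lambda>x. x) ((\<lambda>e. u div e) ` ?A) \<le> sum ((\<lambda>x. x) \<circ> (\<lambda>e. u div e)) ?A"
    using fA by (intro sum_image_le) auto
  also have "sum (\<lambda>x. x) ?A + sum ((\<lambda>x. x) \<circ> (\<lambda>e. u div e)) ?A = dsum u 1"
  proof -
    have "dsum u 1 = (\<Sum>e\<in>?A. e + u div e)" using dsum_eq[of 1 u] by simp
    then show ?thesis by (simp add: sum.distrib comp_def)
  qed
  finally show ?thesis by simp
qed

function chk :: "nat \<Rightarrow> nat \<Rightarrow> nat \<Rightarrow> bool" where
 "chk a b c = (if b \<le> a then True else (120 * dsum a 1 < c*a \<and> chk (a+1) b c))"
  by auto
termination by (relation "Wellfounded.measure (\<lambda>(a,b,c). b - a)") auto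
declare chk.simps[simp del]
lemma c1: "b \<le> a \<Longrightarrow> chk a b c = True" by (simp add: chk.simps)
lemma c2: "\<not> b \<le> a \<Longrightarrow> chk a b c = (120 * dsum a 1 < c*a \<and> chk (a+1) b c)" by (subst chk.simps) simp

lemma chk_correct: "chk a b c \<Longrightarrow> a \<le> u \<Longrightarrow> u < b \<Longrightarrow> 120 * dsum u 1 < c*u"
proof (induction a b c rule: chk.induct)
  case (1 a b c)
  show ?case
  proof (cases "u = a")
    case True then show ?thesis using 1(2,4) c2 by auto
  next
    case False
    then show ?thesis using 1 c2[of b a c] by auto
  qed
qed

lemma ln2_lb: "693/1000 \<le> ln (2::real)"
proof -
  have "ln (2::real) \<in> {(\<Sum>k<3. 2*((2-1)/(2+1))^(2*k+1) / of_nat (2*k+1))..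
        (\<Sum>k<3. 2*((2-1)/(2+1))^(2*k+1) / of_nat (2*k+1)) + 2*(((2-1)/(2+1))^(2*3+1) / (1 - ((2-1)/(2+1))^2) / of_nat (2*3+1))}"
    by (rule ln_approx_bounds) simp
  then show ?thesis by (simp add: eval_nat_numeral)
qed

lemma ln_frac_lb: assumes "1 \<le> (x::real)" shows "2*(x-1)/(x+1) \<le> ln x"
proof (cases "x = 1")
  case True then show ?thesis by simp
next
  case False
  then have "1 < x" using assms by simp
  from ln_inverse_approx_ge[OF _ this] show ?thesis by (simp add: add.commute)
qed

lemma exp_gamma_lb: "71/40 \<le> exp (euler_mascheroni::real)"
proof -
  have "exp (19/33::real) \<le> exp euler_mascheroni"
    using euler_mascheroni_gt_19_over_33 by simp
  moreover have "exp (19/33::real) = exp (19/132) ^ 4"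
    using exp_of_nat_mult[of 4 "19/132::real"] by simp
  moreover have "1 + 19/132 + (19/132)^2/2 \<le> exp (19/132::real)"
    by (rule exp_lower_Taylor_quadratic) simp
  then have "(1 + 19/132 + (19/132)^2/2)^4 \<le> exp (19/132::real) ^ 4"
    by (rule power_mono) simp
  moreover have "(71/40::real) \<le> (1 + 19/132 + (19/132)^2/2)^4" by (simp add: eval_nat_numeral)
  ultimately show ?thesis by linarith
qed

lemma ln_lb:
  fixes x y L :: real and a :: nat
  assumes "2^a * y \<le> x" "1 \<le> y" "L \<le> a*(693/1000) + 2*(y-1)/(y+1)"
  shows "L \<le> ln x"
proof -
  have y0: "0 < y" using assms(2) by simp
  have "ln (2^a * y) = a * ln 2 + ln y"
    using y0 by (simp add: ln_mult ln_realpow)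
  moreover have "a * (693/1000) \<le> a * ln (2::real)"
    using ln2_lb by (intro mult_left_mono) auto
  moreover have "ln (2^a * y) \<le> ln x"
  proof -
    have "0 < 2^a * y" using y0 by simp
    then show ?thesis using assms(1) by (subst ln_le_cancel_iff) auto
  qed
  ultimately show ?thesis using ln_frac_lb[OF assms(2)] assms(3) by linarith
qed

lemma lnln_lb:
  fixes x y L M :: real and a :: nat
  assumes "2^a * y \<le> x" "1 \<le> y" "L \<le> a*(693/1000) + 2*(y-1)/(y+1)" "8 \<le> L"
    "M \<le> 3*(693/1000) + 2*(L/8-1)/(L/8+1)"
  shows "M \<le> ln (ln x)"
proof -
  have L: "L \<le> ln x" by (rule ln_lb[OF assms(1-3)])
  have "ln L \<le> ln (ln x)" using L assms(4) by (subst ln_le_cancel_iff) auto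
  moreover have "ln L = ln 8 + ln (L/8)" using assms(4) by (simp add: ln_div)
  moreover have "ln (8::real) = 3 * ln 2"
    using ln_realpow[of 2 3] by simp
  moreover have "2*(L/8-1)/(L/8+1) \<le> ln (L/8)" using assms(4) by (intro ln_frac_lb) simp
  ultimately show ?thesis using ln2_lb assms(5) by linarith
qed

lemma U1: "405/110 \<le> exp euler_mascheroni * ln (ln (5041::real))"
proof -
  have "21/10 \<le> ln (ln (5041::real))"
    by (rule lnln_lb[where a=12 and y=1 and L="8316/1000"]) simp_all
  moreover have "(405/110::real) \<le> 71/40 * (21/10)" by simp
  ultimately show ?thesis using exp_gamma_lb mult_mono[of "71/40" "exp euler_mascheroni" "21/10" "ln (ln (5041::real))"]
    by simp
qed

lemma U2: "420/110 \<le> exp euler_mascheroni * ln (ln (9240::real))"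
proof -
  have "22/10 \<le> ln (ln (9240::real))"
    by (rule lnln_lb[where a=13 and y="9240/8192" and L="912/100"]) simp_all
  moreover have "(420/110::real) \<le> 71/40 * (22/10)" by simp
  ultimately show ?thesis using exp_gamma_lb mult_mono[of "71/40" "exp euler_mascheroni" "22/10" "ln (ln (9240::real))"]
    by simp
qed

lemma U3: "430/110 \<le> exp euler_mascheroni * ln (ln (16170::real))"
proof -
  have "225/100 \<le> ln (ln (16170::real))"
    by (rule lnln_lb[where a=13 and y="16170/8192" and L="966/100"]) simp_all
  moreover have "(430/110::real) \<le> 71/40 * (225/100)" by simp
  ultimately show ?thesis using exp_gamma_lb mult_mono[of "71/40" "exp euler_mascheroni" "225/100" "ln (ln (16170::real))"]
    by simp
qed

lemma U4: "446/110 \<le> exp euler_mascheroni * ln (ln (27720::real))"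
proof -
  have "231/100 \<le> ln (ln (27720::real))"
    by (rule lnln_lb[where a=14 and y="27720/16384" and L="102/10"]) simp_all
  moreover have "(446/110::real) \<le> 71/40 * (231/100)" by simp
  ultimately show ?thesis using exp_gamma_lb mult_mono[of "71/40" "exp euler_mascheroni" "231/100" "ln (ln (27720::real))"]
    by simp
qed

lemma U5: "461/110 \<le> exp euler_mascheroni * ln (ln (55440::real))"
proof -
  have "238/100 \<le> ln (ln (55440::real))"
    by (rule lnln_lb[where a=15 and y="55440/32768" and L="109/10"]) simp_all
  moreover have "(461/110::real) \<le> 71/40 * (238/100)" by simp
  ultimately show ?thesis using exp_gamma_lb mult_mono[of "71/40" "exp euler_mascheroni" "238/100" "ln (ln (55440::real))"]
    by simp
qed

lemma ln_5041: "8 < ln (5041::real)"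
proof -
  have "8316/1000 \<le> ln (5041::real)"
    by (rule ln_lb[where a=12 and y=1]) simp_all
  then show ?thesis by simp
qed

lemma lnln_mono: assumes "3 \<le> x" "x \<le> (y::real)" shows "ln (ln x) \<le> ln (ln y)"
proof -
  have "0 < ln x" using assms by simp
  moreover have "ln x \<le> ln y" using assms by simp
  ultimately show ?thesis by simp
qed

lemma KT:
  assumes p: "prime p" and u: "0 < u" and r: "prime r" "r dvd k" "\<not> r dvd u"
    and k: "0 < k" "k < p" and m: "5040 < u*k" and rob: "robin_ineq (u*k)"
  shows "robin_ineq (u*p)"
proof -
  define S where "S = real (sigma u)"
  define T where "T = real (sigma (u*k))"
  define Q where "Q = real (sigma (u*p))"
  have s1: "Q \<le> S * (real p + 1)"
    using sigma_mult_prime[OF p u] unfolding Q_def S_def by (metis of_nat_1 of_nat_add of_nat_le_iff of_nat_mult)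
  have s2: "sigma u * (k + k div r) \<le> sigma (u*k)" by (rule sigma_gain[OF r u k(1)])
  have rk: "r \<le> k" using dvd_imp_le r(2) k(1) by blast
  have r0: "0 < r" using r(1) prime_gt_0_nat by blast
  have rp: "r \<le> p" using rk k(2) by simp
  have kdiv: "real (k div r) = real k / real r" using r(2) by (simp add: real_of_nat_div)
  have A1: "S * (real k + real k / real r) \<le> T"
    using s2 unfolding S_def T_def by (metis kdiv of_nat_add of_nat_le_iff of_nat_mult)
  have S0: "0 \<le> S" unfolding S_def by simp
  have A1': "S * real k * (real r + 1) \<le> T * real r"
  proof -
    have "S * (real k + real k / real r) * real r \<le> T * real r"
      using A1 r0 by (intro mult_right_mono) auto
    moreover have "S * (real k + real k / real r) * real r = S * real k * (real r + 1)"
      using r0 by (simp add: field_simps)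
    ultimately show ?thesis by simp
  qed
  have B: "(real p + 1) * real r \<le> (real r + 1) * real p" using rp by (simp add: algebra_simps)
  have A2: "S * (real p + 1) * real k * real r \<le> T * real r * real p"
  proof -
    have "S * (real p + 1) * real k * real r = (S * real k) * ((real p + 1) * real r)" by (simp add: algebra_simps)
    also have "\<dots> \<le> (S * real k) * ((real r + 1) * real p)"
      using B S0 by (intro mult_left_mono) auto
    also have "\<dots> = (S * real k * (real r + 1)) * real p" by (simp add: algebra_simps)
    also have "\<dots> \<le> (T * real r) * real p" using A1' by (intro mult_right_mono) auto
    finally show ?thesis .
  qed
  have A3: "S * (real p + 1) * real k \<le> T * real p"
    using A2 r0 by (simp add: mult.commute mult.left_commute)
  have Tlt: "T < exp euler_mascheroni * real (u*k) * ln (ln (real (u*k)))"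
    using rob unfolding robin_ineq_def T_def .
  have "Q * real k \<le> T * real p"
    using s1 A3 k(1) by (smt (verit) mult_right_mono of_nat_0_le_iff)
  also have "\<dots> < exp euler_mascheroni * real (u*k) * ln (ln (real (u*k))) * real p"
    using Tlt p prime_gt_0_nat by (intro mult_strict_right_mono) auto
  also have "\<dots> = (exp euler_mascheroni * real (u*p) * ln (ln (real (u*k)))) * real k"
    by (simp add: algebra_simps)
  also have "\<dots> \<le> (exp euler_mascheroni * real (u*p) * ln (ln (real (u*p)))) * real k"
  proof -
    have "ln (ln (real (u*k))) \<le> ln (ln (real (u*p)))"
    proof (rule lnln_mono)
      have "5040 < real (u*k)" using m by (metis of_nat_less_iff of_nat_numeral)
      then show "3 \<le> real (u*k)" by linarith
      have "u*k \<le> u*p" using k(2) by simp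
      then show "real (u*k) \<le> real (u*p)" by (simp only: of_nat_le_iff)
    qed
    then show ?thesis by (intro mult_right_mono mult_left_mono) auto
  qed
  finally have "Q * real k < (exp euler_mascheroni * real (u*p) * ln (ln (real (u*p)))) * real k" .
  then have "Q < exp euler_mascheroni * real (u*p) * ln (ln (real (u*p)))"
    using k(1) by (simp add: mult_less_cancel_right)
  then show ?thesis unfolding robin_ineq_def Q_def .
qed

lemma bucket:
  assumes p: "prime p" "11 \<le> p" and u: "0 < u" and c: "120 * dsum u 1 < c * u"
    and N: "N \<le> u*p" "5041 \<le> N" and eN: "real c / 110 \<le> exp euler_mascheroni * ln (ln (real N))"
  shows "robin_ineq (u*p)"
proof -
  define Q where "Q = real (sigma (u*p))"
  have s1: "sigma (u*p) \<le> dsum u 1 * (p+1)"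
    using sigma_mult_prime[OF p(1) u] sigma_le_dsum[OF u] by (meson le_trans mult_le_mono1)
  have "120 * sigma (u*p) < c * u * (p+1)"
  proof -
    have "120 * sigma (u*p) \<le> 120 * dsum u 1 * (p+1)" using s1 by simp
    also have "\<dots> < c * u * (p+1)" using c by (intro mult_strict_right_mono) auto
    finally show ?thesis .
  qed
  then have "real (120 * sigma (u*p)) < real (c * u * (p+1))" by (simp only: of_nat_less_iff)
  then have R1: "120 * Q < real c * real u * (real p + 1)" unfolding Q_def by (simp add: algebra_simps)
  define X where "X = real c * real u"
  have X0: "0 \<le> X" unfolding X_def by simp
  have M: "X * (real p + 1) * 110 \<le> X * real p * 120"
  proof -
    have "(real p + 1) * 110 \<le> real p * 120" using p(2) by simp
    then have "X * ((real p + 1) * 110) \<le> X * (real p * 120)" using X0 by (rule mult_left_mono)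
    then show ?thesis by (simp add: ac_simps)
  qed
  have R1': "120 * Q < X * (real p + 1)" using R1 unfolding X_def .
  have "Q * 13200 < X * real p * 120" using R1' M by linarith
  then have "Q < X * real p / 110" by simp
  moreover have "X * real p / 110 = real c / 110 * real (u*p)" unfolding X_def by simp
  ultimately have Q1: "Q < real c / 110 * real (u*p)" by simp
  have "ln (ln (real N)) \<le> ln (ln (real (u*p)))"
  proof (rule lnln_mono)
    show "3 \<le> real N" using N by simp
    show "real N \<le> real (u*p)" using N(1) by (simp only: of_nat_le_iff)
  qed
  then have "real c / 110 \<le> exp euler_mascheroni * ln (ln (real (u*p)))"
  proof -
    have "exp euler_mascheroni * ln (ln (real N)) \<le> exp euler_mascheroni * ln (ln (real (u*p)))"
      using \<open>ln (ln (real N)) \<le> ln (ln (real (u*p)))\<close> by (intro mult_left_mono) auto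
    then show ?thesis using eN by linarith
  qed
  then have "real c / 110 * real (u*p) \<le> exp euler_mascheroni * ln (ln (real (u*p))) * real (u*p)"
    by (intro mult_right_mono) auto
  with Q1 have "Q < exp euler_mascheroni * ln (ln (real (u*p))) * real (u*p)" by linarith
  then show ?thesis unfolding robin_ineq_def Q_def by (simp only: ac_simps)
qed

lemma caseA:
  assumes p: "prime p" and pl: "ln (real (u*p)) \<le> real p" and u: "5040 < u" and rob: "robin_ineq u"
  shows "robin_ineq (u*p)"
proof -
  define U where "U = real u"
  define P where "P = real p"
  define Q where "Q = real (sigma (u*p))"
  define S where "S = real (sigma u)"
  have U5: "5041 \<le> U" using u unfolding U_def by simp
  have lnU: "8 < ln U" using ln_5041 U5 by (smt (verit) ln_le_cancel_iff)
  have P2: "2 \<le> P" using prime_ge_2_nat[OF p] unfolding P_def by simp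
  have lnP: "0 < ln P" using P2 by simp
  have lnN: "ln (U*P) = ln U + ln P" using U5 P2 by (simp add: ln_mult)
  have pl': "ln (U*P) \<le> P" using pl unfolding U_def P_def by simp
  have lnN0: "0 < ln (U*P)" using lnN lnU lnP by simp
  have k1: "ln (ln U) - ln (ln (U*P)) \<le> ln U / ln (U*P) - 1"
  proof -
    have "ln (ln U / ln (U*P)) \<le> ln U / ln (U*P) - 1" using lnU lnN0 by (intro ln_le_minus_one) simp
    moreover have "ln (ln U / ln (U*P)) = ln (ln U) - ln (ln (U*P))" using lnU lnN0 by (simp add: ln_div)
    ultimately show ?thesis by simp
  qed
  have k2: "ln U / ln (U*P) - 1 = - (ln P / ln (U*P))" using lnN0 lnN by (simp add: field_simps)
  have k3: "ln P \<le> P * (ln P / ln (U*P))"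
  proof -
    have "1 \<le> P / ln (U*P)" using pl' lnN0 by simp
    then have "ln P * 1 \<le> ln P * (P / ln (U*P))" using lnP by (intro mult_left_mono) auto
    then show ?thesis by (simp add: ac_simps)
  qed
  have k4: "ln (ln (U*P)) \<le> ln P" using pl' lnN0 by simp
  have k5: "ln (ln U) \<le> ln (ln (U*P))" using lnU lnN lnP lnN0 by simp
  have key: "ln (ln U) * (P + 1) \<le> P * ln (ln (U*P))"
  proof -
    have "P * (ln (ln (U*P)) - ln (ln U)) \<ge> P * (ln P / ln (U*P))"
      using k1 k2 P2 by (intro mult_left_mono) auto
    then have "P * (ln (ln (U*P)) - ln (ln U)) \<ge> ln (ln U)" using k3 k4 k5 by linarith
    then show ?thesis by (simp add: algebra_simps)
  qed
  have s1: "Q \<le> S * (P + 1)"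
    using sigma_mult_prime[OF p, of u] u unfolding Q_def S_def P_def
    by (metis gr0I not_less0 of_nat_1 of_nat_add of_nat_le_iff of_nat_mult)
  have Slt: "S < exp euler_mascheroni * U * ln (ln U)" using rob unfolding robin_ineq_def S_def U_def .
  have "Q < exp euler_mascheroni * U * ln (ln U) * (P + 1)"
    using s1 Slt P2 by (smt (verit) mult_strict_right_mono)
  also have "\<dots> = exp euler_mascheroni * U * (ln (ln U) * (P + 1))" by (simp add: algebra_simps)
  also have "\<dots> \<le> exp euler_mascheroni * U * (P * ln (ln (U*P)))"
    using key U5 by (intro mult_left_mono) auto
  finally show ?thesis unfolding robin_ineq_def Q_def U_def P_def by (simp add: algebra_simps)
qed

lemma chk_a: "chk 1 200 405" by (simp add: ds1 ds2 c1 c2 del: One_nat_def)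
lemma chk_b: "chk 200 330 405" by (simp add: ds1 ds2 c1 c2 del: One_nat_def)
lemma chk_c: "chk 330 430 405" by (simp add: ds1 ds2 c1 c2 del: One_nat_def)
lemma chk_d: "chk 430 505 405" by (simp add: ds1 ds2 c1 c2 del: One_nat_def)

lemma small_u: "0 < u \<Longrightarrow> u \<le> 504 \<Longrightarrow> 120 * dsum u 1 < 405 * u"
proof -
  assume "0 < u" "u \<le> 504"
  then consider "1 \<le> u \<and> u < 200" | "200 \<le> u \<and> u < 330" | "330 \<le> u \<and> u < 430" | "430 \<le> u \<and> u < 505" by linarith
  then show ?thesis
  proof cases
    case 1 then show ?thesis using chk_correct[OF chk_a, of u] by blast
  next
    case 2 then show ?thesis using chk_correct[OF chk_b, of u] by blast
  next
    case 3 then show ?thesis using chk_correct[OF chk_c, of u] by blast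
  next
    case 4 then show ?thesis using chk_correct[OF chk_d, of u] by blast
  qed
qed

lemma not_prime_9: "\<not> prime (9::nat)"
proof
  assume "prime (9::nat)"
  then have "\<forall>m. m dvd (9::nat) \<longrightarrow> m = 1 \<or> m = 9" by (simp only: prime_nat_iff) blast
  moreover have "(3::nat) dvd 9" by simp
  ultimately have "(3::nat) = 1 \<or> (3::nat) = 9" by blast
  then show False by simp
qed

lemma not_prime_10: "\<not> prime (10::nat)"
proof
  assume "prime (10::nat)"
  then have "\<forall>m. m dvd (10::nat) \<longrightarrow> m = 1 \<or> m = 10" by (simp only: prime_nat_iff) blast
  moreover have "(2::nat) dvd 10" by simp
  ultimately have "(2::nat) = 1 \<or> (2::nat) = 10" by blast
  then show False by simp
qed

theorem theorem1:
  fixes n :: nat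
  assumes "n > 5040"
    and "\<not> robin_ineq n"
    and "\<And>m. 5040 < m \<Longrightarrow> m < n \<Longrightarrow> robin_ineq m"
  shows "ln (real n) > real (Max (prime_factors n))"
proof (rule ccontr)
  assume H: "\<not> ln (real n) > real (Max (prime_factors n))"
  define p where "p = Max (prime_factors n)"
  have pl: "ln (real n) \<le> real p" using H unfolding p_def by simp
  obtain q where q: "prime q" "q dvd n" using prime_factor_nat[of n] assms(1) by auto
  have qin: "q \<in> prime_factors n" using q assms(1) by (simp add: in_prime_factors_iff)
  have fin: "finite (prime_factors n)" by simp
  have pin: "p \<in> prime_factors n" unfolding p_def using fin qin Max_in by blast
  have pp: "prime p" "p dvd n" using pin by (auto simp: in_prime_factors_iff)
  have n5: "5041 \<le> real n" using assms(1) by simp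
  have ln8: "8 < ln (real n)" using ln_5041 n5 by (smt (verit) ln_le_cancel_iff)
  have p9: "9 \<le> p" using pl ln8 by linarith
  have p11: "11 \<le> p"
  proof -
    have "p \<noteq> 9" "p \<noteq> 10" using pp(1) not_prime_9 not_prime_10 by auto
    then show ?thesis using p9 by linarith
  qed
  obtain u where nu: "n = u*p" using pp(2) by (metis dvd_def mult.commute)
  have u0: "0 < u" using nu assms(1) by (cases u) auto
  have contra: "robin_ineq (u*p) \<Longrightarrow> False" using assms(2) nu by simp
  have un: "u < n" using nu p11 u0 by simp
  have robm: "\<And>k. 5040 < u*k \<Longrightarrow> k < p \<Longrightarrow> robin_ineq (u*k)"
  proof -
    fix k assume "5040 < u*k" "k < p"
    moreover have "u*k < n" using \<open>k < p\<close> u0 nu by simp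
    ultimately show "robin_ineq (u*k)" using assms(3) by blast
  qed
  have B: "\<And>c N. 120 * dsum u 1 < c*u \<Longrightarrow> N \<le> u*p \<Longrightarrow> 5041 \<le> N \<Longrightarrow>
      real c / 110 \<le> exp euler_mascheroni * ln (ln (real N)) \<Longrightarrow> False"
    using bucket[OF pp(1) p11 u0] contra by blast
  have KTc: "\<And>k r. prime r \<Longrightarrow> r dvd k \<Longrightarrow> 0 < k \<Longrightarrow> k < p \<Longrightarrow> 5040 < u*k \<Longrightarrow> r dvd u"
  proof (rule ccontr)
    fix k r assume "prime r" "r dvd k" "0 < k" "k < p" "5040 < u*k" "\<not> r dvd u"
    then show False using KT[OF pp(1) u0 \<open>prime r\<close> \<open>r dvd k\<close> \<open>\<not> r dvd u\<close> \<open>0 < k\<close> \<open>k < p\<close> \<open>5040 < u*k\<close>]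
      robm contra by blast
  qed
  have N11: "11*u \<le> u*p" using p11 by simp
  show False
  proof (cases "5040 < u")
    case True
    have "robin_ineq (u*p)"
      using caseA[OF pp(1) _ True assms(3)[OF True un]] pl nu by simp
    then show False by (rule contra)
  next
    case False
    show False
    proof (cases "u \<le> 504")
      case True
      have "120 * dsum u 1 < 405*u" using small_u u0 True by blast
      moreover have "5041 \<le> u*p" using assms(1) nu by simp
      ultimately show False using B[of 405 5041] U1 by simp
    next
      case big: False
      have "2 dvd u" using KTc[of 2 10] p11 big by simp
      moreover have "5 dvd u" using KTc[of 5 10] p11 big by simp
      ultimately have d10: "10 dvd u" by presburger
      have d3: "560 < u \<Longrightarrow> 3 dvd u" using KTc[of 3 9] p11 by simp
      have d7: "720 < u \<Longrightarrow> 7 dvd u" using KTc[of 7 7] p11 by simp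
      show False
      proof (cases "u \<le> 560")
        case True
        obtain t where t: "u = 10*t" using d10 by blast
        have "50 < t" "t \<le> 56" using t big True by simp_all
        then have "t = 51 \<or> t = 52 \<or> t = 53 \<or> t = 54 \<or> t = 55 \<or> t = 56" by presburger
        then have "120 * dsum (10*t) 1 < 405*(10*t)"
          by (elim disjE) (simp_all add: ds1 ds2 del: One_nat_def)
        moreover have "5041 \<le> u*p" using assms(1) nu by simp
        ultimately show False using B[of 405 5041] U1 t by simp
      next
        case gt560: False
        then have "3 dvd u" using d3 by simp
        with d10 have d30: "30 dvd u" by presburger
        show False
        proof (cases "u \<le> 720")
          case True
          obtain t where t: "u = 30*t" using d30 by blast
          have "18 < t" "t \<le> 24" using t gt560 True by simp_all
          then have "t = 19 \<or> t = 20 \<or> t = 21 \<or> t = 22 \<or> t = 23 \<or> t = 24" by presburger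
          then have "120 * dsum (30*t) 1 < 405*(30*t)"
            by (elim disjE) (simp_all add: ds1 ds2 del: One_nat_def)
          moreover have "5041 \<le> u*p" using assms(1) nu by simp
          ultimately show False using B[of 405 5041] U1 t by simp
        next
          case gt720: False
          then have "7 dvd u" using d7 by simp
          with d30 have "210 dvd u" by presburger
          then obtain t where t: "u = 210*t" by blast
          have t1: "3 < t" "t \<le> 24" using t gt720 False by simp_all
          consider "t \<le> 6" | "7 \<le> t \<and> t \<le> 11" | "12 \<le> t \<and> t \<le> 23" | "t = 24" using t1 by linarith
          then show False
          proof cases
            case 1
            then have "t = 4 \<or> t = 5 \<or> t = 6" using t1 by presburger
            then have "120 * dsum (210*t) 1 < 420*(210*t)"
              by (elim disjE) (simp_all add: ds1 ds2 del: One_nat_def)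
            moreover have "9240 \<le> u*p"
            proof -
              have "9240 \<le> 11*u" using t t1 t1 by simp
              then show ?thesis using N11 by linarith
            qed
            ultimately show False using B[of 420 9240] U2 t by simp
          next
            case 2
            then have "t = 7 \<or> t = 8 \<or> t = 9 \<or> t = 10 \<or> t = 11" by presburger
            then have "120 * dsum (210*t) 1 < 430*(210*t)"
              by (elim disjE) (simp_all add: ds1 ds2 del: One_nat_def)
            moreover have "16170 \<le> u*p"
            proof -
              have "16170 \<le> 11*u" using t 2 t1 by simp
              then show ?thesis using N11 by linarith
            qed
            ultimately show False using B[of 430 16170] U3 t by simp
          next
            case 3
            then have "t = 12 \<or> t = 13 \<or> t = 14 \<or> t = 15 \<or> t = 16 \<or> t = 17 \<or> t = 18 \<or> t = 19 \<or> t = 20 \<or> t = 21 \<or> t = 22 \<or> t = 23" by presburger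
            then have "120 * dsum (210*t) 1 < 446*(210*t)"
              by (elim disjE) (simp_all add: ds1 ds2 del: One_nat_def)
            moreover have "27720 \<le> u*p"
            proof -
              have "27720 \<le> 11*u" using t 3 t1 by simp
              then show ?thesis using N11 by linarith
            qed
            ultimately show False using B[of 446 27720] U4 t by simp
          next
            case 4
            then have "120 * dsum (210*t) 1 < 461*(210*t)"
              by (simp add: ds1 ds2 del: One_nat_def)
            moreover have "55440 \<le> u*p"
            proof -
              have "55440 \<le> 11*u" using t 4 t1 by simp
              then show ?thesis using N11 by linarith
            qed
            ultimately show False using B[of 461 55440] U5 t by simp
          qed
        qed
      qed
    qed
  qed
qed

end
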